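(* The relation $\mathcal R_2=\{(w2w,w):w\in\{0,1\}^*\}\subseteq\{0,1,2\}^*\times\{0,1\}^*$ can be computed by a probabilistic finite state transducer with probability $2/3$, and by a quantum finite state transducer with probability $2/3$.
   Context: A probabilistic finite state transducer (pfst) is a tuple $T=(Q,\Sigma_1,\Sigma_2,V,f,q_0,Q_{\rm acc},Q_{\rm rej})$ with finite state set $Q$, finite input/output alphabets $\Sigma_1,\Sigma_2$, initial state $q_0$, disjoint accepting/rejecting sets $Q_{\rm acc},Q_{\rm rej}\subseteq Q$ (the other states are non-halting). For each $a\in\Sigma_1\cup\{\ddagger,\$\}$ ($\ddagger,\$$ are end markers) there is a stochastic $Q\times Q$ matrix $V_a$ and an output function $f_a:Q\to\Sigma_2^*$; $V_\$$ puts all probability on halting states. On input $v$ the machine reads $\ddagger v\$$; in state $q$ reading $a$ it appends $f_a(q)$ to the output tape and moves to state $p$ with probability $(V_a)_{qp}$; if $p$ is accepting (rejecting) it halts and accepts with the current output (rejects). $T(w|v)$ is the probability of accepting with output $w$ on input $v$. A quantum finite state transducer (qfst) has the same data except that each $V_a$ is a unitary on $\ell^2(Q)$ (and $V_\$$ maps the span of non-halting states into the span of halting states). Its non-halting part is a vector $\psi=\sum_{q,w}\alpha_{qw}|q\rangle\otimes|w\rangle\in\ell^2(Q\times\Sigma_2^* )$, initially $|q_0\rangle\otimes|\epsilon\rangle$; reading $a$ maps it to $\psi'=\sum_{q,w}\alpha_{qw}V_a|q\rangle\otimes|wf_a(q)\rangle$ with $V_a|q\rangle=\sum_p(V_a)_{qp}|p\rangle$,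 after which the squared norm of the component of $\psi'$ on $\mathrm{span}(Q_{\rm acc})\otimes|x\rangle$ is added to the probability of accepting with output $x$, the squared norm of the component on $\mathrm{span}(Q_{\rm rej})\otimes\ell^2(\Sigma_2^* )$ to the rejection probability, and the computation continues with the projection onto non-halting states. $T(w|v)$ is defined analogously. For $\alpha>1/2$, $T$ computes $\mathcal R$ with probability $\alpha$ if for all $v,w$: $(v,w)\in\mathcal R\Rightarrow T(w|v)\ge\alpha$ and $(v,w)\notin\mathcal R\Rightarrow T(w|v)\le1-\alpha$. *)

theory Defs
  imports Complex_Main
begin

datatype 'a tape_sym = Inp 'a | LEnd | REnd

text \<open>States are natural numbers drawn from the
 finite set \<open>states\<close>; \<open>trans a q p\<close> is the matrix entry \<open>(V_a)_{qp}\<close>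
 (real for pfst, complex amplitude for qfst); \<open>outf a q\<close> is \<open>f_a(q)\<close>.\<close>
record ('a, 'b, 'c) fst =
  states :: "nat set"
  init   :: nat
  acc    :: "nat set"
  rej    :: "nat set"
  trans  :: "'a tape_sym \<Rightarrow> nat \<Rightarrow> nat \<Rightarrow> 'c"
  outf   :: "'a tape_sym \<Rightarrow> nat \<Rightarrow> 'b list"

definition halting :: "('a, 'b, 'c, 'd) fst_scheme \<Rightarrow> nat set" where
  "halting T = acc T \<union> rej T"

definition fst_basic :: "('a, 'b, 'c, 'd) fst_scheme \<Rightarrow> bool" where
  "fst_basic T \<longleftrightarrow> finite (states T) \<and> init T \<in> states T \<and>
     acc T \<subseteq> states T \<and> rej T \<subseteq> states T \<and> acc T \<inter> rej T = {}"

definition is_pfst :: "('a, 'b, real) fst \<Rightarrow> bool" where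
  "is_pfst T \<longleftrightarrow> fst_basic T \<and>
     (\<forall>a. \<forall>q\<in>states T. \<forall>p\<in>states T. trans T a q p \<ge> 0) \<and>
     (\<forall>a. \<forall>q\<in>states T. (\<Sum>p\<in>states T. trans T a q p) = 1) \<and>
     (\<forall>q\<in>states T - halting T. \<forall>p\<in>states T - halting T. trans T REnd q p = 0)"

text \<open>Quantum fst: every \<open>V_a\<close> unitary on \<open>\<ell>^2(Q)\<close>, where \<open>V_a|q\<rangle> = \<Sum>_p (V_a)_{qp}|p\<rangle>\<close>
 (for a finite-dimensional space, unitarity = orthonormality of the images of the basis);
 \<open>V_$\<close> maps the span of non-halting states into the span of halting states.\<close>
definition is_qfst :: "('a, 'b, complex) fst \<Rightarrow> bool" where
  "is_qfst T \<longleftrightarrow> fst_basic T \<and>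
     (\<forall>a. \<forall>q\<in>states T. \<forall>q'\<in>states T.
        (\<Sum>p\<in>states T. trans T a q p * cnj (trans T a q' p)) = (if q = q' then 1 else 0)) \<and>
     (\<forall>q\<in>states T - halting T. \<forall>p\<in>states T - halting T. trans T REnd q p = 0)"

definition tape :: "'a list \<Rightarrow> 'a tape_sym list" where
  "tape v = LEnd # map Inp v @ [REnd]"

text \<open>Computation paths \<open>q_0 = qs!0, qs!1, \<dots>, qs!k = p\<close> that read the first \<open>k\<close> tape symbols,
 pass only through non-halting states strictly between, end (halt) in \<open>p\<close>, and produce
 output \<open>x\<close> (the output \<open>f_{t_i}(q_i)\<close> is appended on each step, including the last).\<close>
definition runs :: "('a, 'b, 'c) fst \<Rightarrow> 'a tape_sym list \<Rightarrow> nat \<Rightarrow> 'b list \<Rightarrow> nat \<Rightarrow> nat list set" where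
  "runs T t k x p = {qs. length qs = Suc k \<and> set qs \<subseteq> states T \<and> qs ! 0 = init T \<and> qs ! k = p \<and>
      (\<forall>i\<in>{1..<k}. qs ! i \<notin> halting T) \<and>
      concat (map (\<lambda>i. outf T (t ! i) (qs ! i)) [0..<k]) = x}"

definition path_weight :: "('a, 'b, 'c::comm_monoid_mult) fst \<Rightarrow> 'a tape_sym list \<Rightarrow> nat \<Rightarrow> nat list \<Rightarrow> 'c" where
  "path_weight T t k qs = (\<Prod>i<k. trans T (t ! i) (qs ! i) (qs ! Suc i))"

definition pfst_prob :: "('a, 'b, real) fst \<Rightarrow> 'b list \<Rightarrow> 'a list \<Rightarrow> real" where
  "pfst_prob T w v = (let t = tape v in
     \<Sum>k\<in>{1..length t}. \<Sum>p\<in>acc T. \<Sum>qs\<in>runs T t k w p. path_weight T t k qs)"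

text \<open>\<open>T(w|v)\<close> for a qfst: after reading the \<open>k\<close>-th symbol, the amplitude of \<open>|p\<rangle>\<otimes>|w\<rangle>\<close> in
 \<open>\<psi>'\<close> is the sum of the path amplitudes; the squared norm of the component on
 \<open>span(Q_acc)\<otimes>|w\<rangle>\<close> is added to the acceptance probability with output \<open>w\<close>.\<close>
definition qfst_prob :: "('a, 'b, complex) fst \<Rightarrow> 'b list \<Rightarrow> 'a list \<Rightarrow> real" where
  "qfst_prob T w v = (let t = tape v in
     \<Sum>k\<in>{1..length t}. \<Sum>p\<in>acc T. (cmod (\<Sum>qs\<in>runs T t k w p. path_weight T t k qs))\<^sup>2)"

definition computes_with ::
  "('m \<Rightarrow> 'b list \<Rightarrow> 'a list \<Rightarrow> real) \<Rightarrow> 'm \<Rightarrow> ('a list \<times> 'b list) set \<Rightarrow> real \<Rightarrow> bool" where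
  "computes_with P T R \<alpha> \<longleftrightarrow> (\<forall>v w. ((v, w) \<in> R \<longrightarrow> P T w v \<ge> \<alpha>) \<and>
                                   ((v, w) \<notin> R \<longrightarrow> P T w v \<le> 1 - \<alpha>))"

datatype sym3 = T0 | T1 | T2
datatype bit = B0 | B1

fun bit_to_sym3 :: "bit \<Rightarrow> sym3" where
  "bit_to_sym3 B0 = T0" | "bit_to_sym3 B1 = T1"

definition R2 :: "(sym3 list \<times> bit list) set" where
  "R2 = {(map bit_to_sym3 w @ [T2] @ map bit_to_sym3 w, w) | w. True}"

end

theory Submission
  imports Defs
begin


definition Rs :: "('a, 'b, 'c) fst \<Rightarrow> nat \<Rightarrow> 'a tape_sym list \<Rightarrow> nat \<Rightarrow> 'b list \<Rightarrow> nat \<Rightarrow> nat list set" where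
  "Rs T q t k x p = {qs. length qs = Suc k \<and> set qs \<subseteq> states T \<and> qs ! 0 = q \<and> qs ! k = p \<and>
      (\<forall>i\<in>{1..<k}. qs ! i \<notin> halting T) \<and>
      concat (map (\<lambda>i. outf T (t ! i) (qs ! i)) [0..<k]) = x}"

definition W :: "('a, 'b, 'c::comm_semiring_1) fst \<Rightarrow> nat \<Rightarrow> 'a tape_sym list \<Rightarrow> nat \<Rightarrow> 'b list \<Rightarrow> nat \<Rightarrow> 'c" where
  "W T q t k x p = (\<Sum>qs\<in>Rs T q t k x p. path_weight T t k qs)"

lemma runs_Rs: "runs T t k x p = Rs T (init T) t k x p"
  unfolding runs_def Rs_def by simp

lemma Rs_finite: "finite (states T) \<Longrightarrow> finite (Rs T q t k x p)"
  by (rule finite_subset[OF _ finite_lists_length_eq[of "states T" "Suc k"]]) (auto simp: Rs_def)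

lemma Rs_zero: "Rs T q t 0 y p = (if q = p \<and> y = [] \<and> q \<in> states T then {[q]} else {})"
  unfolding Rs_def by (auto simp: length_Suc_conv)

lemma W_zero: "W T q t 0 y p = (if q = p \<and> y = [] \<and> q \<in> states T then 1 else 0)"
  unfolding W_def Rs_zero by (auto simp add: path_weight_def)

lemma concat_shift:
  "concat (map (\<lambda>i. f ((a#t) ! i) ((q#qs') ! i)) [0..<Suc k]) =
   f a q @ concat (map (\<lambda>i. f (t ! i) (qs' ! i)) [0..<k])"
proof -
  have "[0..<Suc k] = 0 # map Suc [0..<k]" by (simp add: map_Suc_upt upt_conv_Cons)
  then show ?thesis by (simp add: o_def)
qed

lemma inter_shift:
  "(\<forall>i\<in>{1..<Suc k}. (q#qs') ! i \<notin> H) \<longleftrightarrow> (0 < k \<longrightarrow> qs' ! 0 \<notin> H) \<and> (\<forall>i\<in>{1..<k}. qs' ! i \<notin> H)"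
proof
  assume A: "\<forall>i\<in>{1..<Suc k}. (q#qs') ! i \<notin> H"
  show "(0 < k \<longrightarrow> qs' ! 0 \<notin> H) \<and> (\<forall>i\<in>{1..<k}. qs' ! i \<notin> H)"
  proof safe
    assume "0 < k" "qs' ! 0 \<in> H" then show False using A[rule_format, of 1] by simp
  next
    fix i assume "i \<in> {1..<k}" "qs' ! i \<in> H" then show False using A[rule_format, of "Suc i"] by simp
  qed
next
  assume B: "(0 < k \<longrightarrow> qs' ! 0 \<notin> H) \<and> (\<forall>i\<in>{1..<k}. qs' ! i \<notin> H)"
  show "\<forall>i\<in>{1..<Suc k}. (q#qs') ! i \<notin> H"
  proof
    fix i assume "i \<in> {1..<Suc k}"
    then obtain j where j: "i = Suc j" "j < k" by (cases i) auto
    then show "(q#qs') ! i \<notin> H" using B by (cases j) auto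
  qed
qed

lemma Rs_Suc:
  assumes q: "q \<in> states T"
  shows "Rs T q (a#t) (Suc k) x p = (if take (length (outf T a q)) x = outf T a q then
     (Cons q) ` (\<Union>q'\<in>{q'\<in>states T. 0 < k \<longrightarrow> q' \<notin> halting T}. Rs T q' t k (drop (length (outf T a q)) x) p)
     else {})"
proof -
  let ?o = "outf T a q"
  have mem: "q # qs' \<in> Rs T q (a#t) (Suc k) x p \<longleftrightarrow>
     take (length ?o) x = ?o \<and> (0 < k \<longrightarrow> qs' ! 0 \<notin> halting T) \<and> qs' \<in> Rs T (qs' ! 0) t k (drop (length ?o) x) p" for qs'
  proof -
    have e: "(?o @ y = x) \<longleftrightarrow> (take (length ?o) x = ?o \<and> y = drop (length ?o) x)" for y
      by (metis append_eq_conv_conj)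
    show ?thesis
      unfolding Rs_def mem_Collect_eq concat_shift inter_shift
      using q e by (cases qs') auto
  qed
  have "qs \<in> Rs T q (a#t) (Suc k) x p \<Longrightarrow> \<exists>qs'. qs = q # qs'" for qs
    unfolding Rs_def by (cases qs) auto
  moreover have "qs' \<in> Rs T q' t k y p \<Longrightarrow> qs' ! 0 = q' \<and> q' \<in> states T" for qs' q' y
    unfolding Rs_def by (cases qs') auto
  ultimately show ?thesis using mem
    by (auto simp: image_iff) blast+
qed

lemma path_weight_Cons:
  "path_weight T (a#t) (Suc k) (q#qs') = trans T a q (qs' ! 0) * path_weight T t k qs'"
  unfolding path_weight_def prod.lessThan_Suc_shift by simp

lemma W_Suc:
  assumes q: "q \<in> states T" and fin: "finite (states T)"
  shows "W T q (a#t) (Suc k) x p = (if take (length (outf T a q)) x = outf T a q then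
     (\<Sum>q'\<in>{q'\<in>states T. 0 < k \<longrightarrow> q' \<notin> halting T}. trans T a q q' * W T q' t k (drop (length (outf T a q)) x) p)
     else 0)"
proof (cases "take (length (outf T a q)) x = outf T a q")
  case True
  let ?y = "drop (length (outf T a q)) x"
  let ?Q = "{q'\<in>states T. 0 < k \<longrightarrow> q' \<notin> halting T}"
  have h0: "qs' ! 0 = q'" if "qs' \<in> Rs T q' t k ?y p" for qs' q'
    using that unfolding Rs_def by auto
  have "W T q (a#t) (Suc k) x p = (\<Sum>qs\<in>(Cons q) ` (\<Union>q'\<in>?Q. Rs T q' t k ?y p). path_weight T (a#t) (Suc k) qs)"
    unfolding W_def Rs_Suc[OF q] using True by simp
  also have "\<dots> = (\<Sum>qs'\<in>(\<Union>q'\<in>?Q. Rs T q' t k ?y p). path_weight T (a#t) (Suc k) (q#qs'))"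
    by (subst sum.reindex) (auto simp: inj_on_def)
  also have "\<dots> = (\<Sum>q'\<in>?Q. \<Sum>qs'\<in>Rs T q' t k ?y p. path_weight T (a#t) (Suc k) (q#qs'))"
    by (rule sum.UNION_disjoint) (use fin h0 in \<open>auto simp: Rs_finite\<close>)
  also have "\<dots> = (\<Sum>q'\<in>?Q. trans T a q q' * W T q' t k ?y p)"
    unfolding W_def sum_distrib_left
    by (intro sum.cong refl) (simp add: path_weight_Cons h0)
  finally show ?thesis using True by simp
next
  case False
  then show ?thesis unfolding W_def Rs_Suc[OF q] by simp
qed



definition S10 :: "nat set" where "S10 = {0,1,2,3,4,5,6,7,8,9}"
definition hset :: "nat set" where "hset = {5,6,7,8,9}"

definition dl :: "sym3 tape_sym \<Rightarrow> nat \<Rightarrow> nat" where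
  "dl a q = (case a of
      Inp T2 \<Rightarrow> (if q = 1 then 2 else if q = 2 then 7 else if q = 7 then 1
                else if q = 3 then 4 else if q = 4 then 8 else if q = 8 then 3 else q)
    | REnd \<Rightarrow> (if q = 0 then 9 else if q = 9 then 0 else if q = 1 then 7 else if q = 7 then 1
                else if q = 2 then 5 else if q = 5 then 2 else if q = 3 then 8 else if q = 8 then 3
                else if q = 4 then 6 else if q = 6 then 4 else q)
    | _ \<Rightarrow> q)"

definition ob :: "sym3 tape_sym \<Rightarrow> nat \<Rightarrow> bit list" where
  "ob a q = (case a of
      Inp T0 \<Rightarrow> (if q = 1 \<or> q = 4 then [B0] else [])
    | Inp T1 \<Rightarrow> (if q = 1 \<or> q = 4 then [B1] else [])
    | _ \<Rightarrow> [])"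

fun exec :: "nat \<Rightarrow> sym3 tape_sym list \<Rightarrow> (nat \<times> bit list \<times> nat) option" where
  "exec q [] = None"
| "exec q (a # t) = (if dl a q \<in> hset then Some (dl a q, ob a q, 1) else
     (case exec (dl a q) t of None \<Rightarrow> None | Some (p, y, k) \<Rightarrow> Some (p, ob a q @ y, Suc k)))"

lemma exec_k: "exec q t = Some (p, x, k) \<Longrightarrow> 1 \<le> k \<and> k \<le> length t"
  by (induction t arbitrary: q p x k) (auto split: if_splits option.splits prod.splits)

lemma dl_S10: "q \<in> S10 \<Longrightarrow> dl a q \<in> S10"
  by (auto simp: S10_def dl_def split: tape_sym.splits sym3.splits)

lemma sum_delta_mult:
  "finite A \<Longrightarrow> (\<Sum>q'\<in>A. (if q' = d then 1 else 0) * f q') = (if d \<in> A then f d else (0::'c::comm_semiring_1))"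
  by (simp add: if_distrib[of "\<lambda>z. z * _"] cong: if_cong)

lemma W_exec:
  fixes T :: "(sym3, bit, 'c::comm_semiring_1) fst"
  assumes st: "states T = S10" and ht: "halting T = hset" and ot: "outf T = ob"
    and tr: "\<And>a q q'. a \<noteq> LEnd \<Longrightarrow> trans T a q q' = (if q' = dl a q then 1 else 0)"
  shows "q \<in> S10 \<Longrightarrow> q \<notin> hset \<Longrightarrow> LEnd \<notin> set t \<Longrightarrow> 1 \<le> k \<Longrightarrow> k \<le> length t \<Longrightarrow> p \<in> hset \<Longrightarrow>
    W T q t k x p = (if exec q t = Some (p, x, k) then 1 else 0)"
proof (induction t arbitrary: q k x)
  case Nil
  then show ?case by simp
next
  case (Cons a t)
  obtain k' where k: "k = Suc k'" using Cons.prems by (cases k) auto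
  have fin: "finite (states T)" by (simp add: st S10_def)
  have aL: "a \<noteq> LEnd" using Cons.prems by auto
  let ?d = "dl a q"
  let ?o = "ob a q"
  let ?y = "drop (length ?o) x"
  have d10: "?d \<in> S10" using dl_S10 Cons.prems by auto
  have W1: "W T q (a#t) (Suc k') x p = (if take (length ?o) x = ?o then
      (if 0 < k' \<longrightarrow> ?d \<notin> hset then W T ?d t k' ?y p else 0) else 0)"
    unfolding W_Suc[OF Cons.prems(1)[folded st] fin] ot tr[OF aL] ht st
    by (subst sum_delta_mult) (use d10 in \<open>auto simp: S10_def\<close>)
  have e: "(?o @ y = x) \<longleftrightarrow> (take (length ?o) x = ?o \<and> y = drop (length ?o) x)" for y
    by (metis append_eq_conv_conj)
  show ?case
  proof (cases "k' = 0")
    case True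
    have "exec (dl a q) t \<noteq> Some (p', y, 0)" for p' y using exec_k by fastforce
    then show ?thesis unfolding k W1 using Cons.prems(6) e True d10
      by (auto simp: st W_zero split: option.splits)
  next
    case False
    show ?thesis
    proof (cases "?d \<in> hset")
      case True
      then show ?thesis unfolding k W1 using False by auto
    next
      case dn: False
      have IH: "W T ?d t k' ?y p = (if exec ?d t = Some (p, ?y, k') then 1 else 0)"
        using Cons.IH[of ?d k' ?y] Cons.prems d10 dn False k by auto
      show ?thesis unfolding k W1 IH using dn e
        by (auto split: option.splits)
    qed
  qed
qed



fun resA :: "sym3 list \<Rightarrow> nat" where
  "resA [] = 7" | "resA (T2 # v) = (if T2 \<in> set v then 7 else 5)"
| "resA (T0 # v) = resA v" | "resA (T1 # v) = resA v"
fun resB :: "sym3 list \<Rightarrow> nat" where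
  "resB [] = 8" | "resB (T2 # v) = (if T2 \<in> set v then 8 else 6)"
| "resB (T0 # v) = resB v" | "resB (T1 # v) = resB v"
fun outA :: "sym3 list \<Rightarrow> bit list" where
  "outA [] = []" | "outA (T2 # v) = []"
| "outA (T0 # v) = B0 # outA v" | "outA (T1 # v) = B1 # outA v"
fun outB :: "sym3 list \<Rightarrow> bit list" where
  "outB [] = []" | "outB (T2 # v) = outA v"
| "outB (T0 # v) = outB v" | "outB (T1 # v) = outB v"

lemma E2: "\<exists>k. exec 2 (map Inp v @ [REnd]) = Some (if T2 \<in> set v then 7 else 5, [], k)"
proof (induction v)
  case (Cons s v) then show ?case by (cases s) (auto simp: dl_def ob_def hset_def)
qed (auto simp: dl_def ob_def hset_def)

lemma E4: "\<exists>k. exec 4 (map Inp v @ [REnd]) = Some (if T2 \<in> set v then 8 else 6, outA v, k)"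
proof (induction v)
  case (Cons s v) then show ?case by (cases s) (auto simp: dl_def ob_def hset_def)
qed (auto simp: dl_def ob_def hset_def)

lemma E1: "\<exists>k. exec 1 (map Inp v @ [REnd]) = Some (resA v, outA v, k)"
proof (induction v)
  case (Cons s v) then show ?case using E2[of v] by (cases s) (auto simp: dl_def ob_def hset_def)
qed (auto simp: dl_def ob_def hset_def)

lemma E3: "\<exists>k. exec 3 (map Inp v @ [REnd]) = Some (resB v, outB v, k)"
proof (induction v)
  case (Cons s v) then show ?case using E4[of v] by (cases s) (auto simp: dl_def ob_def hset_def)
qed (auto simp: dl_def ob_def hset_def)

lemma resA_range: "resA v = 5 \<or> resA v = 7"
  by (induction v rule: resA.induct) auto
lemma resB_range: "resB v = 6 \<or> resB v = 8"
  by (induction v rule: resB.induct) auto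

lemma in1: "resA (map bit_to_sym3 w @ T2 # u) = (if T2 \<in> set u then 7 else 5) \<and>
            outA (map bit_to_sym3 w @ T2 # u) = w \<and>
            resB (map bit_to_sym3 w @ T2 # u) = (if T2 \<in> set u then 8 else 6) \<and>
            outB (map bit_to_sym3 w @ T2 # u) = outA u"
proof (induction w)
  case (Cons b w) then show ?case by (cases b) auto
qed simp

lemma outA_map: "outA (map bit_to_sym3 w) = w"
proof (induction w)
  case (Cons b w) then show ?case by (cases b) auto
qed simp

lemma map_outA: "T2 \<notin> set u \<Longrightarrow> map bit_to_sym3 (outA u) = u"
proof (induction u)
  case (Cons s u) then show ?case by (cases s) auto
qed simp

lemma decomp: "resA v = 5 \<Longrightarrow> \<exists>x u. v = map bit_to_sym3 x @ T2 # u \<and> T2 \<notin> set u \<and> outA v = x \<and> outB v = outA u"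
proof (induction v)
  case Nil then show ?case by simp
next
  case (Cons s v)
  show ?case
  proof (cases s)
    case T0
    have "resA v = 5" using Cons.prems T0 by simp
    then obtain x u where "v = map bit_to_sym3 x @ T2 # u \<and> T2 \<notin> set u \<and> outA v = x \<and> outB v = outA u" using Cons.IH by blast
    then show ?thesis using T0 by (intro exI[of _ "B0 # x"] exI[of _ u]) auto
  next
    case T1
    have "resA v = 5" using Cons.prems T1 by simp
    then obtain x u where "v = map bit_to_sym3 x @ T2 # u \<and> T2 \<notin> set u \<and> outA v = x \<and> outB v = outA u" using Cons.IH by blast
    then show ?thesis using T1 by (intro exI[of _ "B1 # x"] exI[of _ u]) auto
  next
    case T2
    then show ?thesis using Cons.prems by (intro exI[of _ "[]"] exI[of _ v]) (auto split: if_splits)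
  qed
qed

lemma nb: "bit_to_sym3 b \<noteq> T2" by (cases b) auto

lemma R2_char: "(v, w) \<in> R2 \<longleftrightarrow> (resA v = 5 \<and> outA v = w \<and> resB v = 6 \<and> outB v = w)"
proof
  assume "(v, w) \<in> R2"
  then have v: "v = map bit_to_sym3 w @ T2 # map bit_to_sym3 w" unfolding R2_def by auto
  have "T2 \<notin> set (map bit_to_sym3 w)" using nb by (metis ex_map_conv)
  then show "resA v = 5 \<and> outA v = w \<and> resB v = 6 \<and> outB v = w"
    unfolding v using in1[of w "map bit_to_sym3 w"] outA_map by simp
next
  assume H: "resA v = 5 \<and> outA v = w \<and> resB v = 6 \<and> outB v = w"
  then obtain x u where xu: "v = map bit_to_sym3 x @ T2 # u" "T2 \<notin> set u" "outA v = x" "outB v = outA u"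
    using decomp by blast
  have "u = map bit_to_sym3 w" using map_outA[OF xu(2)] xu H by simp
  then show "(v, w) \<in> R2" unfolding R2_def using xu H by auto
qed



definition PM :: "sym3 tape_sym \<Rightarrow> nat \<Rightarrow> nat \<Rightarrow> real" where
  "PM a q p = (if a = LEnd then (if q = 0 then (if p = 1 \<or> p = 3 \<or> p = 7 then 1/3 else 0)
      else if p = q then 1 else 0) else if p = dl a q then 1 else 0)"

definition r2 :: real where "r2 = sqrt (1/2)"
definition r3 :: real where "r3 = sqrt (1/3)"
definition r6 :: real where "r6 = sqrt (1/6)"
lemma r2sq: "r2 * r2 = 1/2" unfolding r2_def by simp
lemma r3sq: "r3 * r3 = 1/3" unfolding r3_def by simp
lemma r6sq: "r6 * r6 = 1/6" unfolding r6_def by simp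
lemma r6sq': "r6 * (r6 * x) = x / 6" by (simp add: mult.assoc[symmetric] r6sq)

definition QM :: "sym3 tape_sym \<Rightarrow> nat \<Rightarrow> nat \<Rightarrow> real" where
  "QM a q p = (if a = LEnd then
      (if q = 0 then (if p = 1 \<or> p = 3 \<or> p = 7 then r3 else 0)
       else if q = 1 then (if p = 1 then r2 else if p = 3 then - r2 else 0)
       else if q = 3 then (if p = 1 \<or> p = 3 then r6 else if p = 7 then - 2 * r6 else 0)
       else if q = 7 then (if p = 0 then 1 else 0)
       else if p = q then 1 else 0)
    else if p = dl a q then 1 else 0)"

definition PT :: "(sym3, bit, real) fst" where
  "PT = \<lparr>states = S10, init = 0, acc = {5,6}, rej = {7,8,9}, trans = PM, outf = ob\<rparr>"

definition QT :: "(sym3, bit, complex) fst" where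
  "QT = \<lparr>states = S10, init = 0, acc = {5,6}, rej = {7,8,9},
         trans = (\<lambda>a q p. complex_of_real (QM a q p)), outf = ob\<rparr>"

lemma S10_cases: "q \<in> S10 \<longleftrightarrow> q = 0 \<or> q = 1 \<or> q = 2 \<or> q = 3 \<or> q = 4 \<or> q = 5 \<or> q = 6 \<or> q = 7 \<or> q = 8 \<or> q = 9"
  by (auto simp: S10_def)

lemma tape_sym_cases: "a = LEnd \<or> a = REnd \<or> a = Inp T0 \<or> a = Inp T1 \<or> a = Inp T2"
  by (metis sym3.exhaust tape_sym.exhaust)

lemma dl_REnd_inv: "dl REnd (dl REnd q) = q"
  by (simp add: dl_def)
lemma dl_T2_inv: "dl (Inp T2) (dl (Inp T2) (dl (Inp T2) q)) = q"
  by (simp add: dl_def)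
lemma dl_inj: assumes "dl a q = dl a q'" shows "q = q'"
proof -
  have "a = LEnd \<or> a = REnd \<or> a = Inp T0 \<or> a = Inp T1 \<or> a = Inp T2" by (rule tape_sym_cases)
  moreover have "a = REnd \<Longrightarrow> ?thesis" using assms by (metis dl_REnd_inv)
  moreover have "a = Inp T2 \<Longrightarrow> ?thesis" using assms by (metis dl_T2_inv)
  moreover have "a = LEnd \<or> a = Inp T0 \<or> a = Inp T1 \<Longrightarrow> ?thesis" using assms by (auto simp: dl_def)
  ultimately show ?thesis by blast
qed

lemma fin10: "finite S10" by (simp add: S10_def)

lemma PT_rows: "q \<in> S10 \<Longrightarrow> (\<Sum>p\<in>S10. PM a q p) = 1"
proof (cases "a = LEnd")
  case True
  assume q: "q \<in> S10"
  show ?thesis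
  proof (cases "q = 0")
    case True then show ?thesis using \<open>a = LEnd\<close> by (simp add: PM_def S10_def)
  next
    case False then show ?thesis using \<open>a = LEnd\<close> q by (simp add: PM_def fin10)
  qed
next
  case False
  assume q: "q \<in> S10"
  then show ?thesis using False dl_S10[OF q, of a] by (simp add: PM_def fin10)
qed

lemma REnd_halt: "q \<in> S10 \<Longrightarrow> q \<notin> hset \<Longrightarrow> dl REnd q \<in> hset"
  by (auto simp: S10_def hset_def dl_def)

lemma PT_valid: "is_pfst PT"
proof -
  have h: "halting PT = hset" by (auto simp: halting_def PT_def hset_def)
  have a: "\<forall>q\<in>S10 - hset. \<forall>p\<in>S10 - hset. PM REnd q p = 0"
    using REnd_halt by (auto simp: PM_def)
  have b: "fst_basic PT" unfolding fst_basic_def PT_def by (simp add: S10_def)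
  have c: "PM a q p \<ge> 0" for a q p by (simp add: PM_def)
  show ?thesis
    unfolding is_pfst_def h using a b c PT_rows by (simp add: PT_def)
qed

lemma QM_orth_nonL: "a \<noteq> LEnd \<Longrightarrow> q \<in> S10 \<Longrightarrow> q' \<in> S10 \<Longrightarrow> (\<Sum>p\<in>S10. QM a q p * QM a q' p) = (if q = q' then 1 else 0)"
  using dl_S10[of q a] dl_inj[of a q q'] by (simp add: QM_def fin10 if_distrib[of "\<lambda>z. z * _"] cong: if_cong)

lemma QM_L_other: "q \<notin> {0,1,3,7} \<Longrightarrow> QM LEnd q p = (if p = q then 1 else 0)"
  by (simp add: QM_def)
lemma QM_L_col: "q \<notin> {0,1,3,7} \<Longrightarrow> QM LEnd q' q = (if q' = q then 1 else 0)"
  by (auto simp: QM_def)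

lemma sdl: "finite A \<Longrightarrow> q \<in> A \<Longrightarrow> (\<Sum>p\<in>A. (if p = q then 1 else 0) * f p) = (f q :: real)"
  by (simp add: if_distrib[of "\<lambda>z. z * _"] cong: if_cong)
lemma sdr: "finite A \<Longrightarrow> q \<in> A \<Longrightarrow> (\<Sum>p\<in>A. f p * (if p = q then 1 else 0)) = (f q :: real)"
  by (simp add: if_distrib[of "\<lambda>z. _ * z"] cong: if_cong)

lemma QM_orth_L: "q \<in> S10 \<Longrightarrow> q' \<in> S10 \<Longrightarrow> (\<Sum>p\<in>S10. QM LEnd q p * QM LEnd q' p) = (if q = q' then 1 else 0)"
proof (cases "q \<in> {0,1,3,7} \<and> q' \<in> {0,1,3,7}")
  case True
  then have "q = 0 \<or> q = 1 \<or> q = 3 \<or> q = 7" "q' = 0 \<or> q' = 1 \<or> q' = 3 \<or> q' = 7" by auto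
  then show ?thesis
    by (elim disjE) (simp_all add: S10_def QM_def r2sq r3sq r6sq r6sq' algebra_simps)
next
  case False
  assume q: "q \<in> S10" and q': "q' \<in> S10"
  show ?thesis
  proof (cases "q \<notin> {0,1,3,7}")
    case True
    then show ?thesis using q by (simp add: QM_L_other QM_L_col fin10 sdl)
  next
    case F: False
    then have "q' \<notin> {0,1,3,7}" using False by blast
    then show ?thesis using q' F by (simp add: QM_L_other QM_L_col fin10 sdr)
  qed
qed

lemma QT_valid: "is_qfst QT"
proof -
  have h: "halting QT = hset" by (auto simp: halting_def QT_def hset_def)
  have e: "(\<Sum>p\<in>S10. complex_of_real (QM a q p) * cnj (complex_of_real (QM a q' p))) =
     complex_of_real (\<Sum>p\<in>S10. QM a q p * QM a q' p)" for a q q'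
    by simp
  have o: "q \<in> S10 \<Longrightarrow> q' \<in> S10 \<Longrightarrow> (\<Sum>p\<in>S10. complex_of_real (QM a q p) * cnj (complex_of_real (QM a q' p))) = (if q = q' then 1 else 0)" for a q q'
    unfolding e using QM_orth_L QM_orth_nonL by (cases "a = LEnd") auto
  have a: "\<forall>q\<in>S10 - hset. \<forall>p\<in>S10 - hset. QM REnd q p = 0"
    using REnd_halt by (auto simp: QM_def)
  have b: "fst_basic QT" unfolding fst_basic_def QT_def by (simp add: S10_def)
  show ?thesis
    unfolding is_qfst_def h using a b o by (simp add: QT_def)
qed



lemma Wtop:
  fixes T :: "(sym3, bit, 'c::comm_semiring_1) fst"
  assumes st: "states T = S10" and ht: "halting T = hset" and ot: "outf T = ob"
    and tr: "\<And>a q q'. a \<noteq> LEnd \<Longrightarrow> trans T a q q' = (if q' = dl a q then 1 else 0)"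
    and t0: "\<And>q'. q' \<notin> {1,3,7} \<Longrightarrow> trans T LEnd 0 q' = 0"
    and t1: "trans T LEnd 0 1 = c" and t3: "trans T LEnd 0 3 = c"
    and k: "k' \<le> Suc (length v)" and p: "p \<in> {5,6}"
  shows "W T 0 (tape v) (Suc k') w p =
    (if 0 < k' \<and> exec 1 (map Inp v @ [REnd]) = Some (p, w, k') then c else 0) +
    (if 0 < k' \<and> exec 3 (map Inp v @ [REnd]) = Some (p, w, k') then c else 0)"
proof -
  let ?r = "map Inp v @ [REnd]"
  have fin: "finite (states T)" by (simp add: st fin10)
  have z: "0 \<in> states T" by (simp add: st S10_def)
  have W0: "W T 0 (tape v) (Suc k') w p =
     (\<Sum>q'\<in>{q'\<in>S10. 0 < k' \<longrightarrow> q' \<notin> hset}. trans T LEnd 0 q' * W T q' ?r k' w p)"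
    unfolding tape_def W_Suc[OF z fin] by (simp add: ot ob_def st ht)
  have ph: "p \<in> hset" using p by (auto simp: hset_def)
  have LE: "LEnd \<notin> set ?r" by auto
  show ?thesis
  proof (cases "k' = 0")
    case True
    have "(\<Sum>q'\<in>{q'\<in>S10. 0 < k' \<longrightarrow> q' \<notin> hset}. trans T LEnd 0 q' * W T q' ?r k' w p) = 0"
      by (rule sum.neutral) (use p t0 in \<open>auto simp: W_zero True\<close>)
    then show ?thesis using W0 True by simp
  next
    case False
    have set: "{q'\<in>S10. 0 < k' \<longrightarrow> q' \<notin> hset} = {0,1,2,3,4}"
      using False by (auto simp: S10_def hset_def)
    have We: "q \<in> {1,3} \<Longrightarrow> W T q ?r k' w p = (if exec q ?r = Some (p, w, k') then 1 else 0)" for q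
      by (rule W_exec[OF st ht ot tr]) (use False k ph LE in \<open>auto simp: S10_def hset_def\<close>)
    show ?thesis unfolding W0 set using False t0[of 0] t0[of 2] t0[of 4] We[of 1] We[of 3]
      by (simp add: t1 t1[unfolded One_nat_def] t3)
  qed
qed

lemma Wval:
  fixes T :: "(sym3, bit, 'c::comm_semiring_1) fst"
  assumes st: "states T = S10" and ht: "halting T = hset" and ot: "outf T = ob"
    and tr: "\<And>a q q'. a \<noteq> LEnd \<Longrightarrow> trans T a q q' = (if q' = dl a q then 1 else 0)"
    and t0: "\<And>q'. q' \<notin> {1,3,7} \<Longrightarrow> trans T LEnd 0 q' = 0"
    and t1: "trans T LEnd 0 1 = c" and t3: "trans T LEnd 0 3 = c"
    and kA: "exec 1 (map Inp v @ [REnd]) = Some (resA v, outA v, kA)"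
    and kB: "exec 3 (map Inp v @ [REnd]) = Some (resB v, outB v, kB)"
    and k: "k' \<le> Suc (length v)" and p: "p \<in> {5,6}"
  shows "W T 0 (tape v) (Suc k') w p =
    (if k' = kA then (if resA v = p \<and> outA v = w then c else 0) else 0) +
    (if k' = kB then (if resB v = p \<and> outB v = w then c else 0) else 0)"
proof -
  have "1 \<le> kA" "1 \<le> kB" using exec_k[OF kA] exec_k[OF kB] by auto
  moreover have eq: "W T 0 (tape v) (Suc k') w p =
    (if 0 < k' \<and> exec 1 (map Inp v @ [REnd]) = Some (p, w, k') then c else 0) +
    (if 0 < k' \<and> exec 3 (map Inp v @ [REnd]) = Some (p, w, k') then c else 0)"
    by (rule Wtop[OF st ht ot tr t0 t1 t3 k p])
  ultimately show ?thesis unfolding eq kA kB by auto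
qed

lemma sdel: "finite S \<Longrightarrow> kA \<in> S \<Longrightarrow> (\<Sum>k\<in>S. if k = kA then X else 0) = X"
  by simp

lemma final_combo: "(v, w) \<in> R2 \<longleftrightarrow> ((resA v = 5 \<and> outA v = w) \<and> (resB v = 6 \<and> outB v = w))"
  using R2_char by blast

lemma PT_prob: "pfst_prob PT w v =
   (if resA v = 5 \<and> outA v = w then 1/3 else 0) + (if resB v = 6 \<and> outB v = w then 1/3 else 0)"
proof -
  obtain kA where kA: "exec 1 (map Inp v @ [REnd]) = Some (resA v, outA v, kA)" using E1 by blast
  obtain kB where kB: "exec 3 (map Inp v @ [REnd]) = Some (resB v, outB v, kB)" using E3 by blast
  have kAr: "kA < Suc (Suc (length v))" "kB < Suc (Suc (length v))" using exec_k[OF kA] exec_k[OF kB] by auto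
  have st: "states PT = S10" and ht: "halting PT = hset" and ot: "outf PT = ob"
    by (auto simp: PT_def halting_def hset_def)
  have tr: "\<And>a q q'. a \<noteq> LEnd \<Longrightarrow> trans PT a q q' = (if q' = dl a q then 1 else 0)"
    and t0: "\<And>q'. q' \<notin> {1,3,7} \<Longrightarrow> trans PT LEnd 0 q' = 0"
    and t1: "trans PT LEnd 0 1 = 1/3" and t3: "trans PT LEnd 0 3 = 1/3"
    by (auto simp: PT_def PM_def)
  have lt: "length (tape v) = Suc (Suc (length v))" by (simp add: tape_def)
  have "pfst_prob PT w v = (\<Sum>k\<in>{1..length (tape v)}. \<Sum>p\<in>{5,6}. W PT 0 (tape v) k w p)"
    unfolding pfst_prob_def Let_def runs_Rs W_def by (simp add: PT_def)
  also have "\<dots> = (\<Sum>k'<Suc (Suc (length v)). \<Sum>p\<in>{5,6}. W PT 0 (tape v) (Suc k') w p)"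
    by (simp only: One_nat_def sum.atLeast1_atMost_eq lt)
  also have "\<dots> = (\<Sum>k'<Suc (Suc (length v)). \<Sum>p\<in>{5,6::nat}.
      (if k' = kA then (if resA v = p \<and> outA v = w then 1/3 else 0) else 0) +
      (if k' = kB then (if resB v = p \<and> outB v = w then 1/3 else 0) else 0))"
    by (intro sum.cong refl, subst Wval[OF st ht ot tr t0 t1 t3 kA kB]) auto
  also have "\<dots> = (\<Sum>p\<in>{5,6::nat}. (if resA v = p \<and> outA v = w then 1/3 else 0) +
      (if resB v = p \<and> outB v = w then 1/3 else 0))"
    by (subst sum.swap) (simp add: sum.distrib kAr del: sum.lessThan_Suc)
  also have "\<dots> = (if resA v = 5 \<and> outA v = w then 1/3 else 0) + (if resB v = 6 \<and> outB v = w then 1/3 else 0)"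
    using resA_range[of v] resB_range[of v] by auto
  finally show ?thesis .
qed


lemma cm_if: "(cmod (if b then x else 0))^2 = (if b then (cmod x)^2 else 0)" by simp
lemma cm_r3: "(cmod (complex_of_real r3))^2 = 1/3"
  by (simp add: power2_eq_square r3sq)

lemma r3sq2: "r3^2 = 1/3" by (simp add: power2_eq_square r3sq)

lemma QT_prob: "qfst_prob QT w v =
   (if resA v = 5 \<and> outA v = w then 1/3 else 0) + (if resB v = 6 \<and> outB v = w then 1/3 else 0)"
proof -
  obtain kA where kA: "exec 1 (map Inp v @ [REnd]) = Some (resA v, outA v, kA)" using E1 by blast
  obtain kB where kB: "exec 3 (map Inp v @ [REnd]) = Some (resB v, outB v, kB)" using E3 by blast
  have kAr: "kA < Suc (Suc (length v))" "kB < Suc (Suc (length v))" using exec_k[OF kA] exec_k[OF kB] by auto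
  have st: "states QT = S10" and ht: "halting QT = hset" and ot: "outf QT = ob"
    by (auto simp: QT_def halting_def hset_def)
  have tr: "\<And>a q q'. a \<noteq> LEnd \<Longrightarrow> trans QT a q q' = (if q' = dl a q then 1 else 0)"
    and t0: "\<And>q'. q' \<notin> {1,3,7} \<Longrightarrow> trans QT LEnd 0 q' = 0"
    and t1: "trans QT LEnd 0 1 = complex_of_real r3" and t3: "trans QT LEnd 0 3 = complex_of_real r3"
    by (auto simp: QT_def QM_def)
  have rA: "resA v \<noteq> 6" "resB v \<noteq> 5" using resA_range[of v] resB_range[of v] by auto
  have lt: "length (tape v) = Suc (Suc (length v))" by (simp add: tape_def)
  have "qfst_prob QT w v = (\<Sum>k\<in>{1..length (tape v)}. \<Sum>p\<in>{5,6}. (cmod (W QT 0 (tape v) k w p))^2)"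
    unfolding qfst_prob_def Let_def runs_Rs W_def by (simp add: QT_def)
  also have "\<dots> = (\<Sum>k'<Suc (Suc (length v)). \<Sum>p\<in>{5,6}. (cmod (W QT 0 (tape v) (Suc k') w p))^2)"
    by (simp only: One_nat_def sum.atLeast1_atMost_eq lt)
  also have "\<dots> = (\<Sum>k'<Suc (Suc (length v)).
      (if k' = kA then (if resA v = 5 \<and> outA v = w then 1/3 else 0) else 0) +
      (if k' = kB then (if resB v = 6 \<and> outB v = w then 1/3 else 0) else 0))"
  proof (intro sum.cong refl)
    fix k' assume "k' \<in> {..<Suc (Suc (length v))}"
    then have k: "k' \<le> Suc (length v)" by auto
    show "(\<Sum>p\<in>{5,6}. (cmod (W QT 0 (tape v) (Suc k') w p))^2) =
      (if k' = kA then (if resA v = 5 \<and> outA v = w then 1/3 else 0) else 0) +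
      (if k' = kB then (if resB v = 6 \<and> outB v = w then 1/3 else 0) else 0)"
      using Wval[OF st ht ot tr t0 t1 t3 kA kB k, of 5 w] Wval[OF st ht ot tr t0 t1 t3 kA kB k, of 6 w] rA
      by (simp add: cm_if cm_r3 r3sq2)
  qed
  also have "\<dots> = (if resA v = 5 \<and> outA v = w then 1/3 else 0) + (if resB v = 6 \<and> outB v = w then 1/3 else 0)"
    by (simp add: sum.distrib kAr del: sum.lessThan_Suc)
  finally show ?thesis .
qed

theorem theorem6:
  shows "(\<exists>T :: (sym3, bit, real) fst. is_pfst T \<and> computes_with pfst_prob T R2 (2/3)) \<and>
         (\<exists>T :: (sym3, bit, complex) fst. is_qfst T \<and> computes_with qfst_prob T R2 (2/3))"
proof
  show "\<exists>T :: (sym3, bit, real) fst. is_pfst T \<and> computes_with pfst_prob T R2 (2/3)"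
    by (rule exI[of _ PT]) (auto simp: PT_valid computes_with_def PT_prob final_combo)
  show "\<exists>T :: (sym3, bit, complex) fst. is_qfst T \<and> computes_with qfst_prob T R2 (2/3)"
    by (rule exI[of _ QT]) (auto simp: QT_valid computes_with_def QT_prob final_combo)
qed


end
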